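(* Suppose that there exist a cyclic HDM$(k,n;h)$, a cyclic DM$(n',k;1)$, and a cyclic DCA$(k,hn'+1;hn')$ satisfying P1 and P2. Then there exists a cyclic DCA$(k,nn'+1;nn')$ satisfying P1 and P2.
   Context: A difference matrix DM$(n,k;\lambda)$ over an abelian group $(G,+)$ of order $n$ is an $n\times k$ matrix $Q=[q(i,j)]$ with entries in $G$ such that for every pair of distinct columns $j,j'$ the multiset $\{q(i,j)-q(i,j') : 0\le i\le n-1\}$ contains every element of $G$ exactly $\lambda$ times. A holey difference matrix HDM$(k,n;h)$ over $G$ with hole a subgroup $H$ of order $h$ is an $(n-h)\times k$ matrix with entries in $G$ such that for every pair of distinct columns the multiset of row differences contains every element of $G\setminus H$ exactly once. A difference covering array DCA$(k,\eta;n)$ over $G$ is an $\eta\times k$ matrix with entries in $G$ such that for every pair of distinct columns $j,j'$ the multiset of row differences $q(i,j)-q(i,j')$ contains every element of $G$ at least once. Any of these is cyclic if $G=\mathbb{Z}_n$. A DCA$(k,n+1;n)$ is taken in normalized form: all entries of its last row (row $n$) and last column (column $k-1$) equal $0$. It satisfies P1 if $0$ occurs at least twice in every column, and P2 if for all distinct columns $j,j'$ with $j\neq k-1\neq j'$, the set $\{q(i,j)-q(i,j') : 0\le i\le n-1\}$ equals $G\setminus\{0\}$. *)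

theory Defs
  imports Main
begin

text \<open>Matrices over the cyclic group Z_m are functions Q :: nat => nat => int
  (row index, column index), whose entries (within the matrix range) lie in
  {0..<m}, the standard representatives of Z_m.\<close>

definition zdiff :: "nat \<Rightarrow> int \<Rightarrow> int \<Rightarrow> int" where
  "zdiff m a b = (a - b) mod int m"

definition entries_in :: "nat \<Rightarrow> nat \<Rightarrow> nat \<Rightarrow> (nat \<Rightarrow> nat \<Rightarrow> int) \<Rightarrow> bool" where
  "entries_in m rows k Q \<longleftrightarrow> (\<forall>i<rows. \<forall>j<k. Q i j \<in> {0..<int m})"

definition cyclic_DM :: "nat \<Rightarrow> nat \<Rightarrow> nat \<Rightarrow> (nat \<Rightarrow> nat \<Rightarrow> int) \<Rightarrow> bool" where
  "cyclic_DM m k lam Q \<longleftrightarrow> 0 < m \<and> entries_in m (lam * m) k Q \<and>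
     (\<forall>j<k. \<forall>j'<k. j \<noteq> j' \<longrightarrow>
        (\<forall>g\<in>{0..<int m}. card {i. i < lam * m \<and> zdiff m (Q i j) (Q i j') = g} = lam))"

definition hole :: "nat \<Rightarrow> nat \<Rightarrow> int set" where
  "hole m h = {g \<in> {0..<int m}. int (m div h) dvd g}"

definition cyclic_HDM :: "nat \<Rightarrow> nat \<Rightarrow> nat \<Rightarrow> (nat \<Rightarrow> nat \<Rightarrow> int) \<Rightarrow> bool" where
  "cyclic_HDM k m h Q \<longleftrightarrow> 0 < m \<and> 0 < h \<and> h dvd m \<and> entries_in m (m - h) k Q \<and>
     (\<forall>j<k. \<forall>j'<k. j \<noteq> j' \<longrightarrow>
        (\<forall>g\<in>{0..<int m} - hole m h.
            card {i. i < m - h \<and> zdiff m (Q i j) (Q i j') = g} = 1))"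

definition cyclic_DCA :: "nat \<Rightarrow> nat \<Rightarrow> nat \<Rightarrow> (nat \<Rightarrow> nat \<Rightarrow> int) \<Rightarrow> bool" where
  "cyclic_DCA k eta m Q \<longleftrightarrow> 0 < m \<and> entries_in m eta k Q \<and>
     (\<forall>j<k. \<forall>j'<k. j \<noteq> j' \<longrightarrow>
        (\<forall>g\<in>{0..<int m}. \<exists>i<eta. zdiff m (Q i j) (Q i j') = g))"

definition normalized_DCA :: "nat \<Rightarrow> nat \<Rightarrow> (nat \<Rightarrow> nat \<Rightarrow> int) \<Rightarrow> bool" where
  "normalized_DCA k m Q \<longleftrightarrow> (\<forall>j<k. Q m j = 0) \<and> (0 < k \<longrightarrow> (\<forall>i\<le>m. Q i (k - 1) = 0))"

definition DCA_P1 :: "nat \<Rightarrow> nat \<Rightarrow> (nat \<Rightarrow> nat \<Rightarrow> int) \<Rightarrow> bool" where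
  "DCA_P1 k m Q \<longleftrightarrow> (\<forall>j<k. 2 \<le> card {i. i \<le> m \<and> Q i j = 0})"

definition DCA_P2 :: "nat \<Rightarrow> nat \<Rightarrow> (nat \<Rightarrow> nat \<Rightarrow> int) \<Rightarrow> bool" where
  "DCA_P2 k m Q \<longleftrightarrow> (\<forall>j<k. \<forall>j'<k. j \<noteq> j' \<and> j \<noteq> k - 1 \<and> j' \<noteq> k - 1 \<longrightarrow>
       {zdiff m (Q i j) (Q i j') | i. i < m} = {0..<int m} - {0})"

definition cyclic_DCA_P12 :: "nat \<Rightarrow> nat \<Rightarrow> (nat \<Rightarrow> nat \<Rightarrow> int) \<Rightarrow> bool" where
  "cyclic_DCA_P12 k m Q \<longleftrightarrow> cyclic_DCA k (m + 1) m Q \<and> normalized_DCA k m Q \<and>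
     DCA_P1 k m Q \<and> DCA_P2 k m Q"

end

theory Submission
  imports Defs
begin

lemma hole_card:
  assumes "n = h * t" "0 < h" "0 < t"
  shows "card (hole n h) = h"
proof -
  have nd: "n div h = t" using assms by simp
  have "hole n h = (\<lambda>q. int t * q) ` {0..<int h}"
  proof
    show "hole n h \<subseteq> (\<lambda>q. int t * q) ` {0..<int h}"
    proof
      fix g assume g: "g \<in> hole n h"
      then obtain q where q: "g = int t * q" and g0: "0 \<le> g" "g < int n"
        unfolding hole_def nd by (auto elim!: dvdE)
      have "0 \<le> q" using q g0 assms by (simp add: zero_le_mult_iff)
      moreover have "q < int h"
      proof (rule ccontr)
        assume "\<not> q < int h"
        then have "int t * int h \<le> int t * q" using assms by simp
        then show False using q g0 assms by (simp add: mult.commute)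
      qed
      ultimately show "g \<in> (\<lambda>q. int t * q) ` {0..<int h}" using q by (intro image_eqI[where x=q]) auto
    qed
    show "(\<lambda>q. int t * q) ` {0..<int h} \<subseteq> hole n h"
    proof
      fix g assume "g \<in> (\<lambda>q. int t * q) ` {0..<int h}"
      then obtain q where q0: "q \<in> {0..<int h}" "g = int t * q" by (elim imageE)
      then have q: "g = int t * q" "0 \<le> q" "q < int h" by auto
      have "int t * q < int t * int h" using q assms by simp
      then show "g \<in> hole n h" using q assms unfolding hole_def nd
        by (auto simp: mult.commute)
    qed
  qed
  moreover have "inj_on (\<lambda>q. int t * q) {0..<int h}" using assms by (auto simp: inj_on_def)
  ultimately show ?thesis by (simp add: card_image)
qed

lemma hdm_all_rows:
  assumes HA: "cyclic_HDM k n h A" and j: "j < k" "j' < k" "j \<noteq> j'" and r: "r < n - h"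
  shows "zdiff n (A r j) (A r j') \<notin> hole n h"
proof -
  from HA have n0: "0 < n" and h0: "0 < h" and hd: "h dvd n"
    and cov: "\<And>g. g \<in> {0..<int n} - hole n h \<Longrightarrow>
        card {i. i < n - h \<and> zdiff n (A i j) (A i j') = g} = 1"
    using j unfolding cyclic_HDM_def by auto
  obtain t where t: "n = h * t" using hd by (auto elim: dvdE)
  have t0: "0 < t" using t n0 by (cases t) auto
  define G where "G = {0..<int n} - hole n h"
  define f where "f g = (SOME r. r < n - h \<and> zdiff n (A r j) (A r j') = g)" for g
  have fp: "f g < n - h \<and> zdiff n (A (f g) j) (A (f g) j') = g" if "g \<in> G" for g
  proof -
    have "card {i. i < n - h \<and> zdiff n (A i j) (A i j') = g} = 1" using cov that G_def by auto
    then have "{i. i < n - h \<and> zdiff n (A i j) (A i j') = g} \<noteq> {}" by (metis card.empty zero_neq_one)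
    then have "\<exists>r. r < n - h \<and> zdiff n (A r j) (A r j') = g" by auto
    then show ?thesis unfolding f_def by (rule someI_ex)
  qed
  have inj: "inj_on f G" by (metis fp inj_onI)
  have sub: "f ` G \<subseteq> {0..<n-h}" using fp by auto
  have hs: "hole n h \<subseteq> {0..<int n}" unfolding hole_def by auto
  have "card G = n - h" unfolding G_def using hs hole_card[OF t h0 t0]
    by (simp add: card_Diff_subset finite_subset)
  then have "card (f ` G) = card {0..<n-h}" using inj by (simp add: card_image)
  then have "f ` G = {0..<n-h}" using sub by (simp add: card_subset_eq)
  then obtain g where g: "g \<in> G" "r = f g" using r by (metis atLeastLessThan_iff imageE zero_le)
  then show ?thesis using fp[OF g(1)] G_def by auto
qed

theorem mainTheorem7:
  fixes k n h n' :: nat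
  assumes "\<exists>Q. cyclic_HDM k n h Q"
    and "\<exists>Q. cyclic_DM n' k 1 Q"
    and "\<exists>Q. cyclic_DCA_P12 k (h * n') Q"
  shows "\<exists>Q. cyclic_DCA_P12 k (n * n') Q"
proof -
  obtain A where HA: "cyclic_HDM k n h A" using assms(1) by blast
  obtain B where HB: "cyclic_DM n' k 1 B" using assms(2) by blast
  obtain D where HD: "cyclic_DCA_P12 k (h * n') D" using assms(3) by blast
  have n0: "0 < n" and h0: "0 < h" and hd: "h dvd n"
    using HA unfolding cyclic_HDM_def by auto
  obtain t where t: "n = h * t" using hd by (auto elim: dvdE)
  have t0: "0 < t" using t n0 by (cases t) auto
  have nd': "n div h = t" using t h0 by simp
  have hn: "h \<le> n" using t t0 by simp
  have n'0: "0 < n'" using HB unfolding cyclic_DM_def by auto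
  define M where "M = h * n'"
  define N where "N = n * n'"
  define P where "P = (n - h) * n'"
  have NM: "N = t * M" unfolding N_def M_def t by simp
  have PMN: "P + M = N" using hn unfolding P_def M_def N_def by (simp add: add_mult_distrib[symmetric])
  have M0: "0 < M" using h0 n'0 M_def by simp
  have N0: "0 < N" using n0 n'0 N_def by simp
  have NMi: "int N = int t * int M" using NM by simp
  have Dcov: "\<And>j j' g. j<k \<Longrightarrow> j'<k \<Longrightarrow> j\<noteq>j' \<Longrightarrow> g \<in> {0..<int M} \<Longrightarrow> \<exists>i<M+1. zdiff M (D i j) (D i j') = g"
    using HD unfolding cyclic_DCA_P12_def cyclic_DCA_def M_def by blast
  have Dent: "\<And>i j. i < M+1 \<Longrightarrow> j<k \<Longrightarrow> D i j \<in> {0..<int M}"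
    using HD unfolding cyclic_DCA_P12_def cyclic_DCA_def entries_in_def M_def by blast
  have Dnorm1: "\<And>j. j<k \<Longrightarrow> D M j = 0" and Dnorm2: "\<And>i. 0<k \<Longrightarrow> i \<le> M \<Longrightarrow> D i (k-1) = 0"
    using HD unfolding cyclic_DCA_P12_def normalized_DCA_def M_def by auto
  have DP1: "\<And>j. j<k \<Longrightarrow> 2 \<le> card {i. i \<le> M \<and> D i j = 0}"
    using HD unfolding cyclic_DCA_P12_def DCA_P1_def M_def by auto
  have DP2: "\<And>j j'. j<k \<Longrightarrow> j'<k \<Longrightarrow> j\<noteq>j' \<and> j\<noteq>k-1 \<and> j'\<noteq>k-1 \<Longrightarrow>
       {zdiff M (D i j) (D i j') | i. i < M} = {0..<int M} - {0}"
    using HD unfolding cyclic_DCA_P12_def DCA_P2_def M_def by blast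
  define C where "C i j = A (i div n') j + int n * B (i mod n') j" for i j
  define Q where "Q i j = (if i < P then (C i j - C i (k-1)) mod int N else int t * D (i - P) j)" for i j
  have zQ1: "zdiff N (Q i j) (Q i j') = (C i j - C i j') mod int N" if "i < P" for i j j'
    using that unfolding zdiff_def Q_def by (simp add: mod_diff_eq)
  have zQ2: "zdiff N (Q i j) (Q i j') = int t * zdiff M (D (i-P) j) (D (i-P) j')" if "\<not> i < P" for i j j'
  proof -
    have "zdiff N (Q i j) (Q i j') = (int t * (D (i-P) j - D (i-P) j')) mod (int t * int M)"
      using that unfolding zdiff_def Q_def NMi by (simp add: right_diff_distrib)
    also have "\<dots> = int t * zdiff M (D (i-P) j) (D (i-P) j')"
      unfolding zdiff_def by (rule mod_mult_mult1)
    finally show ?thesis .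
  qed
  have decomp: "\<exists>q. g = int t * q \<and> 0 \<le> q \<and> q < int M"
    if g: "0 \<le> g" "g < int N" "int t dvd g" for g
  proof -
    obtain q where q: "g = int t * q" using g by (auto elim: dvdE)
    have "0 \<le> q" using q g t0 by (simp add: zero_le_mult_iff)
    moreover have "q < int M"
    proof (rule ccontr)
      assume "\<not> q < int M"
      then have "int t * int M \<le> int t * q" using t0 by simp
      then show False using q g NMi by simp
    qed
    ultimately show ?thesis using q by blast
  qed
  have LemA: "\<exists>i<P. (C i j - C i j') mod int N = g"
    if j: "j<k" "j'<k" "j\<noteq>j'" and g: "0 \<le> g" "g < int N" and nd: "\<not> int t dvd g" for j j' g
  proof -
    define g0 where "g0 = g mod int n"
    have tn: "int t dvd int n" using t by simp
    have "\<not> int t dvd g0" unfolding g0_def using nd tn by (simp add: dvd_mod_iff)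
    moreover have "0 \<le> g0" "g0 < int n" using n0 g0_def by auto
    ultimately have g0G: "g0 \<in> {0..<int n} - hole n h" unfolding hole_def nd' by simp
    then have "card {r. r < n - h \<and> zdiff n (A r j) (A r j') = g0} = 1"
      using HA j unfolding cyclic_HDM_def by blast
    then have "{r. r < n - h \<and> zdiff n (A r j) (A r j') = g0} \<noteq> {}" by (metis card.empty zero_neq_one)
    then obtain r where r: "r < n - h" "zdiff n (A r j) (A r j') = g0" by auto
    define e where "e = A r j - A r j'"
    have "e mod int n = g mod int n" using r(2) unfolding zdiff_def e_def g0_def by simp
    then have "int n dvd g - e" by (metis mod_eq_dvd_iff)
    then obtain q where q: "g - e = int n * q" by (auto elim: dvdE)
    have "q mod int n' \<in> {0..<int n'}" using n'0 by simp
    then have "card {s. s < 1 * n' \<and> zdiff n' (B s j) (B s j') = q mod int n'} = 1"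
      using HB j unfolding cyclic_DM_def by blast
    then have "{s. s < 1 * n' \<and> zdiff n' (B s j) (B s j') = q mod int n'} \<noteq> {}" by (metis card.empty zero_neq_one)
    then obtain s where s: "s < n'" "zdiff n' (B s j) (B s j') = q mod int n'" by auto
    define f where "f = B s j - B s j'"
    have "f mod int n' = q mod int n'" using s unfolding zdiff_def f_def by simp
    then have "int n' dvd f - q" by (simp add: mod_eq_dvd_iff)
    then obtain u where u: "f - q = int n' * u" by (auto elim: dvdE)
    define i where "i = r * n' + s"
    have idiv: "i div n' = r" "i mod n' = s" using s n'0 unfolding i_def by auto
    have "i < r * n' + n'" using s unfolding i_def by simp
    also have "\<dots> = (r + 1) * n'" by simp
    also have "\<dots> \<le> (n - h) * n'" using r(1) by (intro mult_le_mono1) simp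
    finally have iP: "i < P" unfolding P_def .
    have f': "f = q + int n' * u" using u by simp
    have e': "e = g - int n * q" using q by simp
    have "C i j - C i j' = e + int n * f" unfolding C_def idiv e_def f_def by (simp add: algebra_simps)
    also have "\<dots> = g + int N * u" unfolding f' e' N_def by (simp add: algebra_simps)
    finally have "(C i j - C i j') mod int N = g" using g by simp
    then show ?thesis using iP by blast
  qed
  have LemB: "\<not> int t dvd ((C i j - C i j') mod int N)"
    if j: "j<k" "j'<k" "j\<noteq>j'" and i: "i < P" for i j j'
  proof
    assume a: "int t dvd (C i j - C i j') mod int N"
    have tN: "int t dvd int N" using NMi by simp
    have tn: "int t dvd int n" using t by simp
    have "int t dvd C i j - C i j'" using a tN by (simp add: dvd_mod_iff)
    moreover have "C i j - C i j' = (A (i div n') j - A (i div n') j') + int n * (B (i mod n') j - B (i mod n') j')"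
      unfolding C_def by (simp add: algebra_simps)
    moreover have "int t dvd int n * (B (i mod n') j - B (i mod n') j')" using tn by simp
    ultimately have "int t dvd A (i div n') j - A (i div n') j'" by (metis dvd_add_left_iff)
    then have dz: "int t dvd zdiff n (A (i div n') j) (A (i div n') j')" unfolding zdiff_def using tn by (simp add: dvd_mod_iff)
    have "i div n' < n - h" using i unfolding P_def by (simp add: less_mult_imp_div_less)
    then have "zdiff n (A (i div n') j) (A (i div n') j') \<notin> hole n h" using hdm_all_rows[OF HA j] by blast
    moreover have "zdiff n (A (i div n') j) (A (i div n') j') \<in> {0..<int n}" unfolding zdiff_def using n0 by simp
    ultimately show False using dz unfolding hole_def nd' by simp
  qed
  have cov: "\<exists>i<N+1. zdiff N (Q i j) (Q i j') = g"
    if j: "j<k" "j'<k" "j\<noteq>j'" and g: "g \<in> {0..<int N}" for j j' g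
  proof (cases "int t dvd g")
    case True
    then obtain q where q: "g = int t * q" "0 \<le> q" "q < int M" using decomp g by auto
    then obtain i' where i': "i' < M+1" "zdiff M (D i' j) (D i' j') = q" using Dcov[OF j, of q] by auto
    have "zdiff N (Q (P+i') j) (Q (P+i') j') = g" using zQ2[of "P+i'"] i' q by simp
    moreover have "P + i' < N + 1" using i' PMN by simp
    ultimately show ?thesis by blast
  next
    case False
    then obtain i where "i<P" "(C i j - C i j') mod int N = g" using LemA[OF j, of g] g False by auto
    then show ?thesis using zQ1 PMN by (intro exI[of _ i]) auto
  qed
  have ent: "entries_in N (N+1) k Q"
    unfolding entries_in_def
  proof (intro allI impI)
    fix i j assume i: "i < N+1" and j: "j < k"
    show "Q i j \<in> {0..<int N}"
    proof (cases "i < P")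
      case True then show ?thesis using N0 by (simp add: Q_def)
    next
      case False
      then have "i - P < M + 1" using i PMN by simp
      then have "D (i-P) j \<in> {0..<int M}" using Dent j by blast
      then show ?thesis using False t0 NMi by (simp add: Q_def mult_strict_left_mono)
    qed
  qed
  have norm: "normalized_DCA k N Q"
    unfolding normalized_DCA_def
  proof (intro conjI allI impI)
    fix j assume "j < k"
    moreover have "N - P = M" using PMN by simp
    ultimately show "Q N j = 0" using Dnorm1 PMN by (simp add: Q_def)
  next
    fix i assume k: "0 < k" and i: "i \<le> N"
    show "Q i (k-1) = 0"
    proof (cases "i < P")
      case True then show ?thesis by (simp add: Q_def)
    next
      case False
      then have "i - P \<le> M" using i PMN by simp
      then show ?thesis using False Dnorm2 k by (simp add: Q_def)
    qed
  qed
  have P1: "2 \<le> card {i. i \<le> N \<and> Q i j = 0}" if j: "j<k" for j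
  proof -
    have "(\<lambda>i'. P + i') ` {i'. i' \<le> M \<and> D i' j = 0} \<subseteq> {i. i \<le> N \<and> Q i j = 0}"
      using PMN t0 by (auto simp: Q_def)
    moreover have "finite {i. i \<le> N \<and> Q i j = 0}" by simp
    ultimately have "card ((\<lambda>i'. P + i') ` {i'. i' \<le> M \<and> D i' j = 0}) \<le> card {i. i \<le> N \<and> Q i j = 0}"
      by (simp add: card_mono)
    moreover have "card ((\<lambda>i'. P + i') ` {i'. i' \<le> M \<and> D i' j = 0}) = card {i'. i' \<le> M \<and> D i' j = 0}"
      by (simp add: card_image)
    ultimately show ?thesis using DP1[OF j] by simp
  qed
  have P2: "{zdiff N (Q i j) (Q i j') | i. i < N} = {0..<int N} - {0}"
    if j: "j<k" "j'<k" "j\<noteq>j' \<and> j\<noteq>k-1 \<and> j'\<noteq>k-1" for j j'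
  proof
    show "{zdiff N (Q i j) (Q i j') | i. i < N} \<subseteq> {0..<int N} - {0}"
    proof
      fix x assume "x \<in> {zdiff N (Q i j) (Q i j') | i. i < N}"
      then obtain i where i: "i < N" "x = zdiff N (Q i j) (Q i j')" by blast
      show "x \<in> {0..<int N} - {0}"
      proof (cases "i < P")
        case True
        then have x: "x = (C i j - C i j') mod int N" using zQ1 i by simp
        moreover have "\<not> int t dvd x" using LemB j True x by simp
        ultimately show ?thesis using N0 by auto
      next
        case False
        then have x: "x = int t * zdiff M (D (i-P) j) (D (i-P) j')" using zQ2 i by simp
        have "i - P < M" using i False PMN by simp
        then have "zdiff M (D (i-P) j) (D (i-P) j') \<in> {0..<int M} - {0}" using DP2[OF j] by blast
        then show ?thesis using x t0 NMi by (auto simp: mult_strict_left_mono)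
      qed
    qed
    show "{0..<int N} - {0} \<subseteq> {zdiff N (Q i j) (Q i j') | i. i < N}"
    proof
      fix g assume g: "g \<in> {0..<int N} - {0}"
      show "g \<in> {zdiff N (Q i j) (Q i j') | i. i < N}"
      proof (cases "int t dvd g")
        case True
        then obtain q where q: "g = int t * q" "0 \<le> q" "q < int M" using decomp g by auto
        then have "q \<in> {0..<int M} - {0}" using g by auto
        then obtain i' where i': "i' < M" "q = zdiff M (D i' j) (D i' j')" using DP2[OF j] by blast
        have "zdiff N (Q (P+i') j) (Q (P+i') j') = g" using zQ2[of "P+i'"] i' q by simp
        moreover have "P + i' < N" using i' PMN by simp
        ultimately show ?thesis by blast
      next
        case False
        then obtain i where "i<P" "(C i j - C i j') mod int N = g" using LemA[of j j' g] j g False by auto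
        moreover have "i < N" using \<open>i<P\<close> PMN by simp
        ultimately show ?thesis using zQ1[of i j j'] by (metis (mono_tags, lifting) mem_Collect_eq)
      qed
    qed
  qed
  have "cyclic_DCA_P12 k N Q"
    unfolding cyclic_DCA_P12_def cyclic_DCA_def DCA_P1_def DCA_P2_def
    using N0 ent norm P1 P2 cov by blast
  then show ?thesis unfolding N_def by blast
qed

end
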